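(* Let $G=(V,E,d)$ be as in the context and suppose that $\alpha=\{1,\dots,k\}\subseteq V$ is a clique in $G$ (every pair $i<j$ in $\alpha$ satisfies $ij\in E$). Define $$\widehat\Omega:=\{X\in\mathcal{S}^n_{c,+}:\ \mathcal{K}(X)_{ij}=d_{ij}\ \text{ for all }1\le i<j\le k\},$$ and assume $\widehat\Omega\neq\emptyset$. Let $d_\alpha\in\mathcal{S}^k$ be the matrix with zero diagonal and $(d_\alpha)_{ij}=(d_\alpha)_{ji}=d_{ij}$ for $1\le i<j\le k$, and let $\mathcal{K}^\dagger d_\alpha:=-\tfrac12 J_k d_\alpha J_k$ where $J_k=I_k-\tfrac1k ee^T$ (this matrix lies in $\mathcal{S}^k_{c,+}$). Then for any matrix $\widehat Y\in\mathcal{S}^k$ exposing $\operatorname{face}(\mathcal{K}^\dagger d_\alpha;\mathcal{S}^k_{c,+})$, the $n\times n$ matrix $\begin{bmatrix}\widehat Y&0\\0&0\end{bmatrix}$ exposes $\operatorname{face}(\widehat\Omega;\mathcal{S}^n_{c,+})$.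
   Context: $G=(V,E,d)$: weighted undirected graph, $V=\{1,\dots,n\}$, $E\subseteq\{ij:1\le i<j\le n\}$, $d\in\mathbb{R}^E$ nonnegative. $\mathcal{S}^m$ is the space of real symmetric $m\times m$ matrices with trace inner product $\langle A,B\rangle=\operatorname{tr}(AB)$; $e$ is the all-ones vector of appropriate size. $\mathcal{K}:\mathcal{S}^n\to\mathcal{S}^n$ is defined by $\mathcal{K}(X)_{ij}=X_{ii}+X_{jj}-2X_{ij}$. $\mathcal{S}^m_{c,+}=\{X\in\mathcal{S}^m: X\succeq 0,\ Xe=0\}$ (centered PSD matrices). A face of $\mathcal{S}^m_{c,+}$ is a convex subset $F$ such that any line segment in $\mathcal{S}^m_{c,+}$ whose relative interior meets $F$ lies in $F$. For a convex set $\Omega\subseteq\mathcal{S}^m_{c,+}$ (or a single matrix), $\operatorname{face}(\Omega;\mathcal{S}^m_{c,+})$ is the smallest face of $\mathcal{S}^m_{c,+}$ containing $\Omega$. A matrix $Y$ exposes a face $F$ of $\mathcal{S}^m_{c,+}$ if $Y\succeq 0$, $Ye=0$, and $F=\{X\in\mathcal{S}^m_{c,+}:\langle X,Y\rangle=0\}$. *)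

theory Defs
  imports Complex_Main "Jordan_Normal_Form.Matrix"
begin

text \<open>Real m x m matrices are JNF matrices in carrier_mat m m; indices are 0,...,m-1.\<close>

definition mat_trace :: "real mat \<Rightarrow> real" where
  "mat_trace A = (\<Sum>i<dim_row A. A $$ (i, i))"

definition tr_inner :: "real mat \<Rightarrow> real mat \<Rightarrow> real" where
  "tr_inner A B = mat_trace (A * B)"

definition ones_vec :: "nat \<Rightarrow> real vec" where
  "ones_vec m = vec m (\<lambda>_. 1)"

definition sym_mats :: "nat \<Rightarrow> real mat set" where
  "sym_mats m = {X \<in> carrier_mat m m. transpose_mat X = X}"

definition psd :: "real mat \<Rightarrow> bool" where
  "psd X \<longleftrightarrow> (\<forall>v \<in> carrier_vec (dim_row X). 0 \<le> v \<bullet> (X *\<^sub>v v))"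

definition centered_psd :: "nat \<Rightarrow> real mat set" where
  "centered_psd m = {X \<in> sym_mats m. psd X \<and> X *\<^sub>v ones_vec m = 0\<^sub>v m}"

definition Kmap :: "real mat \<Rightarrow> real mat" where
  "Kmap X = mat (dim_row X) (dim_col X) (\<lambda>(i, j). X $$ (i, i) + X $$ (j, j) - 2 * X $$ (i, j))"

definition seg_pt :: "real \<Rightarrow> real mat \<Rightarrow> real mat \<Rightarrow> real mat" where
  "seg_pt t X Y = (1 - t) \<cdot>\<^sub>m X + t \<cdot>\<^sub>m Y"

definition convex_mats :: "real mat set \<Rightarrow> bool" where
  "convex_mats F \<longleftrightarrow> (\<forall>X\<in>F. \<forall>Y\<in>F. \<forall>t. 0 \<le> t \<and> t \<le> 1 \<longrightarrow> seg_pt t X Y \<in> F)"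

definition is_face :: "real mat set \<Rightarrow> real mat set \<Rightarrow> bool" where
  "is_face S F \<longleftrightarrow> F \<subseteq> S \<and> convex_mats F \<and>
     (\<forall>X\<in>S. \<forall>Y\<in>S. (\<exists>t. 0 < t \<and> t < 1 \<and> seg_pt t X Y \<in> F) \<longrightarrow>
        (\<forall>t. 0 \<le> t \<and> t \<le> 1 \<longrightarrow> seg_pt t X Y \<in> F))"

definition face_hull :: "real mat set \<Rightarrow> real mat set \<Rightarrow> real mat set" where
  "face_hull S \<Omega> = \<Inter> {F. is_face S F \<and> \<Omega> \<subseteq> F}"

definition exposes :: "nat \<Rightarrow> real mat \<Rightarrow> real mat set \<Rightarrow> bool" where
  "exposes m Y F \<longleftrightarrow> Y \<in> carrier_mat m m \<and> psd Y \<and> Y *\<^sub>v ones_vec m = 0\<^sub>v m \<and>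
     F = {X \<in> centered_psd m. tr_inner X Y = 0}"

definition Jmat :: "nat \<Rightarrow> real mat" where
  "Jmat k = 1\<^sub>m k - (1 / real k) \<cdot>\<^sub>m mat k k (\<lambda>_. 1)"

definition Kdag :: "nat \<Rightarrow> real mat \<Rightarrow> real mat" where
  "Kdag k D = (- 1 / 2) \<cdot>\<^sub>m (Jmat k * D * Jmat k)"

text \<open>d_alpha for the clique alpha = {0,...,k-1}: zero diagonal, (i,j) and (j,i) entries d(i,j) for i<j\<close>
definition d_alpha :: "nat \<Rightarrow> (nat \<times> nat \<Rightarrow> real) \<Rightarrow> real mat" where
  "d_alpha k d = mat k k (\<lambda>(i, j). if i < j then d (i, j) else if j < i then d (j, i) else 0)"

end

theory Submission
  imports Defs
begin


definition Q :: "nat \<Rightarrow> real mat \<Rightarrow> (nat \<Rightarrow> real) \<Rightarrow> real" where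
  "Q m A f = (\<Sum>i<m. \<Sum>j<m. f i * A $$ (i, j) * f j)"

lemma quad_vec:
  assumes "A \<in> carrier_mat m m" "v \<in> carrier_vec m"
  shows "v \<bullet> (A *\<^sub>v v) = Q m A (\<lambda>i. v $ i)"
proof -
  have "v \<bullet> (A *\<^sub>v v) = (\<Sum>i<m. v $ i * (\<Sum>j<m. A $$ (i, j) * v $ j))"
    using assms by (auto simp: scalar_prod_def mult_mat_vec_def atLeast0LessThan intro!: sum.cong)
  also have "\<dots> = Q m A (\<lambda>i. v $ i)"
    by (simp add: Q_def sum_distrib_left mult.assoc)
  finally show ?thesis .
qed

lemma psd_iff:
  assumes "A \<in> carrier_mat m m"
  shows "psd A \<longleftrightarrow> (\<forall>f. 0 \<le> Q m A f)"
proof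
  assume p: "psd A"
  show "\<forall>f. 0 \<le> Q m A f"
  proof
    fix f :: "nat \<Rightarrow> real"
    have "vec m f \<in> carrier_vec m" by simp
    then have "0 \<le> vec m f \<bullet> (A *\<^sub>v vec m f)" using p assms unfolding psd_def by auto
    also have "\<dots> = Q m A (\<lambda>i. vec m f $ i)" using quad_vec[OF assms] by simp
    also have "\<dots> = Q m A f" unfolding Q_def by (intro sum.cong) auto
    finally show "0 \<le> Q m A f" .
  qed
next
  assume h: "\<forall>f. 0 \<le> Q m A f"
  show "psd A" unfolding psd_def
  proof
    fix v :: "real vec" assume "v \<in> carrier_vec (dim_row A)"
    then have v: "v \<in> carrier_vec m" using assms by simp
    show "0 \<le> v \<bullet> (A *\<^sub>v v)" unfolding quad_vec[OF assms v] using h by simp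
  qed
qed

lemma centered_iff:
  assumes "A \<in> carrier_mat m m"
  shows "A *\<^sub>v ones_vec m = 0\<^sub>v m \<longleftrightarrow> (\<forall>i<m. (\<Sum>j<m. A $$ (i, j)) = 0)"
proof -
  have "\<And>i. i < m \<Longrightarrow> (A *\<^sub>v ones_vec m) $ i = (\<Sum>j<m. A $$ (i, j))"
    using assms by (auto simp: scalar_prod_def mult_mat_vec_def ones_vec_def atLeast0LessThan intro!: sum.cong)
  then show ?thesis using assms
    by (auto simp: vec_eq_iff ones_vec_def)
qed

lemma sym_iff:
  assumes "A \<in> carrier_mat m m"
  shows "transpose_mat A = A \<longleftrightarrow> (\<forall>i<m. \<forall>j<m. A $$ (j, i) = A $$ (i, j))"
  using assms by (auto simp: mat_eq_iff)

lemma cpsd_iff: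
  "A \<in> centered_psd m \<longleftrightarrow> A \<in> carrier_mat m m \<and> (\<forall>i<m. \<forall>j<m. A $$ (j, i) = A $$ (i, j))
     \<and> (\<forall>f. 0 \<le> Q m A f) \<and> (\<forall>i<m. (\<Sum>j<m. A $$ (i, j)) = 0)"
proof (cases "A \<in> carrier_mat m m")
  case True
  then show ?thesis unfolding centered_psd_def sym_mats_def
    using psd_iff[OF True] centered_iff[OF True] sym_iff[OF True] by simp
qed (simp add: centered_psd_def sym_mats_def)

lemma Q_add: "A \<in> carrier_mat m m \<Longrightarrow> B \<in> carrier_mat m m \<Longrightarrow> Q m (A + B) f = Q m A f + Q m B f"
  unfolding Q_def by (simp add: sum.distrib[symmetric] algebra_simps)

lemma Q_minus: "A \<in> carrier_mat m m \<Longrightarrow> B \<in> carrier_mat m m \<Longrightarrow> Q m (A - B) f = Q m A f - Q m B f"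
  unfolding Q_def by (simp add: sum_subtractf[symmetric] algebra_simps)

lemma Q_smult: "A \<in> carrier_mat m m \<Longrightarrow> Q m (c \<cdot>\<^sub>m A) f = c * Q m A f"
  unfolding Q_def by (simp add: sum_distrib_left algebra_simps)

lemma seg_carrier: "A \<in> carrier_mat m m \<Longrightarrow> B \<in> carrier_mat m m \<Longrightarrow> seg_pt t A B \<in> carrier_mat m m"
  unfolding seg_pt_def by simp

lemma seg_idx: "A \<in> carrier_mat m m \<Longrightarrow> B \<in> carrier_mat m m \<Longrightarrow> i < m \<Longrightarrow> j < m \<Longrightarrow>
   seg_pt t A B $$ (i, j) = (1 - t) * A $$ (i, j) + t * B $$ (i, j)"
  unfolding seg_pt_def by simp

lemma Q_seg: "A \<in> carrier_mat m m \<Longrightarrow> B \<in> carrier_mat m m \<Longrightarrow>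
   Q m (seg_pt t A B) f = (1 - t) * Q m A f + t * Q m B f"
  unfolding seg_pt_def by (simp add: Q_add Q_smult)

lemma cpsd_lin:
  assumes "A \<in> centered_psd m" "B \<in> centered_psd m" "0 \<le> a" "0 \<le> b"
  shows "a \<cdot>\<^sub>m A + b \<cdot>\<^sub>m B \<in> centered_psd m"
proof -
  have A: "A \<in> carrier_mat m m" "\<forall>i<m. \<forall>j<m. A $$ (j, i) = A $$ (i, j)" "\<forall>f. 0 \<le> Q m A f"
     "\<forall>i<m. (\<Sum>j<m. A $$ (i, j)) = 0" using assms(1) cpsd_iff by auto
  have B: "B \<in> carrier_mat m m" "\<forall>i<m. \<forall>j<m. B $$ (j, i) = B $$ (i, j)" "\<forall>f. 0 \<le> Q m B f"
     "\<forall>i<m. (\<Sum>j<m. B $$ (i, j)) = 0" using assms(2) cpsd_iff by auto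
  have c: "a \<cdot>\<^sub>m A + b \<cdot>\<^sub>m B \<in> carrier_mat m m" using A B by simp
  show ?thesis unfolding cpsd_iff
  proof (intro conjI allI impI c)
    fix i j assume "i < m" "j < m"
    then show "(a \<cdot>\<^sub>m A + b \<cdot>\<^sub>m B) $$ (j, i) = (a \<cdot>\<^sub>m A + b \<cdot>\<^sub>m B) $$ (i, j)"
      using A B by simp
  next
    fix f
    show "0 \<le> Q m (a \<cdot>\<^sub>m A + b \<cdot>\<^sub>m B) f"
      using A B assms(3,4) by (simp add: Q_add Q_smult)
  next
    fix i assume i: "i < m"
    have "(\<Sum>j<m. (a \<cdot>\<^sub>m A + b \<cdot>\<^sub>m B) $$ (i, j)) = a * (\<Sum>j<m. A $$ (i, j)) + b * (\<Sum>j<m. B $$ (i, j))"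
      using A(1) B(1) i by (simp add: sum.distrib sum_distrib_left)
    then show "(\<Sum>j<m. (a \<cdot>\<^sub>m A + b \<cdot>\<^sub>m B) $$ (i, j)) = 0" using A(4) B(4) i by simp
  qed
qed

lemma cpsd_seg: "A \<in> centered_psd m \<Longrightarrow> B \<in> centered_psd m \<Longrightarrow> 0 \<le> t \<Longrightarrow> t \<le> 1 \<Longrightarrow>
  seg_pt t A B \<in> centered_psd m"
  unfolding seg_pt_def by (rule cpsd_lin) auto

lemma cpsd_carrier: "A \<in> centered_psd m \<Longrightarrow> A \<in> carrier_mat m m"
  using cpsd_iff by auto

lemma cpsd_smult: "A \<in> centered_psd m \<Longrightarrow> 0 \<le> c \<Longrightarrow> c \<cdot>\<^sub>m A \<in> centered_psd m"
proof -
  assume a: "A \<in> centered_psd m" "0 \<le> c"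
  have "c \<cdot>\<^sub>m A + 0 \<cdot>\<^sub>m A \<in> centered_psd m" by (rule cpsd_lin) (use a in auto)
  moreover have "c \<cdot>\<^sub>m A + 0 \<cdot>\<^sub>m A = c \<cdot>\<^sub>m A" using cpsd_carrier[OF a(1)]
    by (intro eq_matI) auto
  ultimately show ?thesis by simp
qed

lemma cpsd_add: "A \<in> centered_psd m \<Longrightarrow> B \<in> centered_psd m \<Longrightarrow> A + B \<in> centered_psd m"
proof -
  assume a: "A \<in> centered_psd m" "B \<in> centered_psd m"
  have "1 \<cdot>\<^sub>m A + 1 \<cdot>\<^sub>m B \<in> centered_psd m" by (rule cpsd_lin) (use a in auto)
  moreover have "1 \<cdot>\<^sub>m A + 1 \<cdot>\<^sub>m B = A + B" using cpsd_carrier[OF a(1)] cpsd_carrier[OF a(2)]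
    by (intro eq_matI) auto
  ultimately show ?thesis by simp
qed

lemma convex_cpsd: "convex_mats (centered_psd m)"
  unfolding convex_mats_def using cpsd_seg by blast

lemma face_self: "convex_mats S \<Longrightarrow> is_face S S"
  unfolding is_face_def convex_mats_def by blast

lemma face_hull_face:
  assumes "convex_mats S" "\<Omega> \<subseteq> S"
  shows "is_face S (face_hull S \<Omega>)" "\<Omega> \<subseteq> face_hull S \<Omega>"
proof -
  let ?Fs = "{F. is_face S F \<and> \<Omega> \<subseteq> F}"
  have SF: "S \<in> ?Fs" using assms face_self by auto
  show "\<Omega> \<subseteq> face_hull S \<Omega>" unfolding face_hull_def by blast
  have sub: "face_hull S \<Omega> \<subseteq> S" unfolding face_hull_def using SF by blast
  have cv: "convex_mats (face_hull S \<Omega>)"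
    unfolding convex_mats_def face_hull_def
  proof (intro ballI allI impI InterI)
    fix X Y F and t :: real assume X: "X \<in> \<Inter> ?Fs" and Y: "Y \<in> \<Inter> ?Fs" and t: "0 \<le> t \<and> t \<le> 1" and F: "F \<in> ?Fs"
    then have "X \<in> F" "Y \<in> F" "convex_mats F" unfolding is_face_def by auto
    then show "seg_pt t X Y \<in> F" using t unfolding convex_mats_def by blast
  qed
  show "is_face S (face_hull S \<Omega>)"
    unfolding is_face_def
  proof (intro conjI sub cv ballI impI allI)
    fix X Y and t :: real assume X: "X \<in> S" and Y: "Y \<in> S" and ex: "\<exists>t. 0 < t \<and> t < 1 \<and> seg_pt t X Y \<in> face_hull S \<Omega>"
      and t: "0 \<le> t \<and> t \<le> 1"
    show "seg_pt t X Y \<in> face_hull S \<Omega>" unfolding face_hull_def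
    proof (rule InterI)
      fix F assume F: "F \<in> ?Fs"
      from ex obtain t0 where "0 < t0" "t0 < 1" "seg_pt t0 X Y \<in> face_hull S \<Omega>" by blast
      then have "seg_pt t0 X Y \<in> F" using F unfolding face_hull_def by blast
      then show "seg_pt t X Y \<in> F" using F X Y t \<open>0 < t0\<close> \<open>t0 < 1\<close> unfolding is_face_def by blast
    qed
  qed
qed

lemma face_cone2:
  assumes F: "is_face (centered_psd m) F" and Z: "Z \<in> F" and s: "0 \<le> s" "s \<le> 2"
  shows "s \<cdot>\<^sub>m Z \<in> F"
proof -
  have ZS: "Z \<in> centered_psd m" using F Z unfolding is_face_def by auto
  have Zc: "Z \<in> carrier_mat m m" using cpsd_carrier[OF ZS] .
  have X0: "0 \<cdot>\<^sub>m Z \<in> centered_psd m" "2 \<cdot>\<^sub>m Z \<in> centered_psd m" using cpsd_smult[OF ZS] by auto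
  have seg: "seg_pt t (0 \<cdot>\<^sub>m Z) (2 \<cdot>\<^sub>m Z) = (2 * t) \<cdot>\<^sub>m Z" for t
    unfolding seg_pt_def using Zc by (intro eq_matI) auto
  have "seg_pt (1/2) (0 \<cdot>\<^sub>m Z) (2 \<cdot>\<^sub>m Z) = Z" unfolding seg using Zc by (intro eq_matI) auto
  then have "\<exists>t. 0 < t \<and> t < 1 \<and> seg_pt t (0 \<cdot>\<^sub>m Z) (2 \<cdot>\<^sub>m Z) \<in> F"
    using Z by (intro exI[of _ "1/2"]) auto
  then have "seg_pt (s/2) (0 \<cdot>\<^sub>m Z) (2 \<cdot>\<^sub>m Z) \<in> F" using F X0 s unfolding is_face_def by auto
  then show ?thesis unfolding seg by simp
qed

lemma face_cone:
  assumes F: "is_face (centered_psd m) F" and Z: "Z \<in> F" and c: "0 \<le> c"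
  shows "c \<cdot>\<^sub>m Z \<in> F"
proof -
  have ind: "\<forall>Z\<in>F. \<forall>s. 0 \<le> s \<and> s \<le> 2 ^ N \<longrightarrow> s \<cdot>\<^sub>m Z \<in> F" for N :: nat
  proof (induction N)
    case 0
    then show ?case using face_cone2[OF F] by auto
  next
    case (Suc N)
    show ?case
    proof (intro ballI allI impI)
      fix Z and s :: real assume Z: "Z \<in> F" and s: "0 \<le> s \<and> s \<le> 2 ^ Suc N"
      have Z2: "2 \<cdot>\<^sub>m Z \<in> F" using face_cone2[OF F Z] by auto
      have "(s / 2) \<cdot>\<^sub>m (2 \<cdot>\<^sub>m Z) \<in> F" using Suc Z2 s by auto
      moreover have "(s / 2) \<cdot>\<^sub>m (2 \<cdot>\<^sub>m Z) = s \<cdot>\<^sub>m Z" by (intro eq_matI) auto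
      ultimately show "s \<cdot>\<^sub>m Z \<in> F" by simp
    qed
  qed
  obtain N :: nat where "c < 2 ^ N" using real_arch_pow[of 2 c] by auto
  then show ?thesis using ind[of N] Z c by auto
qed

lemma face_sum:
  assumes F: "is_face (centered_psd m) F" and A: "A \<in> centered_psd m" and B: "B \<in> centered_psd m"
    and AB: "A + B \<in> F"
  shows "A \<in> F"
proof -
  have Ac: "A \<in> carrier_mat m m" and Bc: "B \<in> carrier_mat m m" using A B cpsd_carrier by auto
  have S2: "2 \<cdot>\<^sub>m A \<in> centered_psd m" "2 \<cdot>\<^sub>m B \<in> centered_psd m" using cpsd_smult A B by auto
  have "seg_pt (1/2) (2 \<cdot>\<^sub>m A) (2 \<cdot>\<^sub>m B) = A + B" unfolding seg_pt_def using Ac Bc by (intro eq_matI) auto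
  then have "\<exists>t. 0 < t \<and> t < 1 \<and> seg_pt t (2 \<cdot>\<^sub>m A) (2 \<cdot>\<^sub>m B) \<in> F"
    using AB by (intro exI[of _ "1/2"]) auto
  then have "seg_pt 0 (2 \<cdot>\<^sub>m A) (2 \<cdot>\<^sub>m B) \<in> F" using F S2 unfolding is_face_def by auto
  moreover have "seg_pt 0 (2 \<cdot>\<^sub>m A) (2 \<cdot>\<^sub>m B) = 2 \<cdot>\<^sub>m A" unfolding seg_pt_def using Ac Bc by (intro eq_matI) auto
  ultimately have "(1/2) \<cdot>\<^sub>m (2 \<cdot>\<^sub>m A) \<in> F" using face_cone[OF F] by auto
  moreover have "(1/2) \<cdot>\<^sub>m (2 \<cdot>\<^sub>m A) = A" using Ac by (intro eq_matI) auto
  ultimately show ?thesis by simp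
qed

lemma face_dom:
  assumes F: "is_face (centered_psd m) F" and Z: "Z \<in> F" and X: "X \<in> centered_psd m"
    and K: "0 \<le> K" and le: "\<forall>f. Q m X f \<le> K * Q m Z f"
  shows "X \<in> F"
proof -
  have ZS: "Z \<in> centered_psd m" using F Z unfolding is_face_def by auto
  have Zc: "Z \<in> carrier_mat m m" and Xc: "X \<in> carrier_mat m m" using ZS X cpsd_carrier by auto
  have KZ: "K \<cdot>\<^sub>m Z \<in> F" using face_cone[OF F Z K] .
  let ?W = "K \<cdot>\<^sub>m Z - X"
  have Wc: "?W \<in> carrier_mat m m" using Zc Xc by (simp add: minus_carrier_mat)
  have W: "?W \<in> centered_psd m" unfolding cpsd_iff
  proof (intro conjI allI impI Wc)
    fix i j assume "i < m" "j < m"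
    then show "?W $$ (j, i) = ?W $$ (i, j)" using Zc Xc ZS X cpsd_iff by auto
  next
    fix f show "0 \<le> Q m ?W f" using le Zc Xc by (simp add: Q_minus Q_smult)
  next
    fix i assume i: "i < m"
    have "(\<Sum>j<m. ?W $$ (i, j)) = K * (\<Sum>j<m. Z $$ (i, j)) - (\<Sum>j<m. X $$ (i, j))"
      using Zc Xc i by (simp add: sum_subtractf sum_distrib_left)
    moreover have "(\<Sum>j<m. Z $$ (i, j)) = 0" "(\<Sum>j<m. X $$ (i, j)) = 0"
      using ZS X i unfolding cpsd_iff by blast+
    ultimately show "(\<Sum>j<m. ?W $$ (i, j)) = 0" by simp
  qed
  have "X + ?W = K \<cdot>\<^sub>m Z" using Zc Xc by (intro eq_matI) auto
  then show ?thesis using face_sum[OF F X W] KZ by simp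
qed

lemma mult_idx: "A \<in> carrier_mat a b \<Longrightarrow> B \<in> carrier_mat b c \<Longrightarrow> i < a \<Longrightarrow> j < c \<Longrightarrow>
  (A * B) $$ (i, j) = (\<Sum>l<b. A $$ (i, l) * B $$ (l, j))"
  by (simp add: scalar_prod_def atLeast0LessThan)

lemma tr_idx: "A \<in> carrier_mat m m \<Longrightarrow> B \<in> carrier_mat m m \<Longrightarrow>
  tr_inner A B = (\<Sum>i<m. \<Sum>j<m. A $$ (i, j) * B $$ (j, i))"
  unfolding tr_inner_def mat_trace_def by (auto intro!: sum.cong simp: scalar_prod_def atLeast0LessThan)

lemma tr_seg: "A \<in> carrier_mat m m \<Longrightarrow> B \<in> carrier_mat m m \<Longrightarrow> Y \<in> carrier_mat m m \<Longrightarrow>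
  tr_inner (seg_pt t A B) Y = (1 - t) * tr_inner A Y + t * tr_inner B Y"
proof -
  assume a: "A \<in> carrier_mat m m" "B \<in> carrier_mat m m" "Y \<in> carrier_mat m m"
  have "tr_inner (seg_pt t A B) Y = (\<Sum>i<m. \<Sum>j<m. (1-t) * (A$$(i,j) * Y$$(j,i)) + t * (B$$(i,j)*Y$$(j,i)))"
    unfolding tr_idx[OF seg_carrier[OF a(1,2)] a(3)]
    by (intro sum.cong refl) (simp add: seg_idx[OF a(1,2)] distrib_right)
  also have "\<dots> = (1 - t) * tr_inner A Y + t * tr_inner B Y"
    using a by (simp add: tr_idx sum.distrib sum_distrib_left)
  finally show ?thesis .
qed

lemma Q_restrict:
  assumes "k \<le> n" "\<And>i. k \<le> i \<Longrightarrow> f i = 0"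
  shows "Q n A f = Q k A f"
proof -
  have "Q n A f = (\<Sum>i<k. \<Sum>j<n. f i * A $$ (i, j) * f j)"
    unfolding Q_def using assms by (intro sum.mono_neutral_right) auto
  also have "\<dots> = Q k A f"
    unfolding Q_def using assms by (intro sum.cong refl sum.mono_neutral_right) auto
  finally show ?thesis .
qed

definition cm :: "nat \<Rightarrow> real mat \<Rightarrow> real mat" where
  "cm k X = mat k k (\<lambda>(i, j). X $$ (i, j) - (\<Sum>l<k. X $$ (l, j)) / k - (\<Sum>l<k. X $$ (i, l)) / k
      + (\<Sum>l<k. \<Sum>l'<k. X $$ (l, l')) / (k * k))"

definition Pv :: "nat \<Rightarrow> (nat \<Rightarrow> real) \<Rightarrow> nat \<Rightarrow> real" where
  "Pv k w = (\<lambda>i. if i < k then w i - (\<Sum>l<k. w l) / k else 0)"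

lemma cm_carrier: "cm k X \<in> carrier_mat k k" unfolding cm_def by simp

lemma cm_idx: "i < k \<Longrightarrow> j < k \<Longrightarrow> cm k X $$ (i, j) = X $$ (i, j) - (\<Sum>l<k. X $$ (l, j)) / k - (\<Sum>l<k. X $$ (i, l)) / k
      + (\<Sum>l<k. \<Sum>l'<k. X $$ (l, l')) / (k * k)"
  unfolding cm_def by simp

lemma Q_cm:
  assumes "k \<le> n"
  shows "Q k (cm k X) w = Q n X (Pv k w)"
proof -
  define a where "a = (\<Sum>l<k. w l) / k"
  define C where "C j = (\<Sum>l<k. X $$ (l, j))" for j
  define R where "R i = (\<Sum>l<k. X $$ (i, l))" for i
  define T where "T = (\<Sum>l<k. \<Sum>l'<k. X $$ (l, l'))"
  have "Q n X (Pv k w) = Q k X (Pv k w)" by (rule Q_restrict) (use assms in \<open>auto simp: Pv_def\<close>)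
  also have "\<dots> = (\<Sum>i<k. \<Sum>j<k. (w i - a) * X $$ (i, j) * (w j - a))"
    unfolding Q_def Pv_def a_def by simp
  also have "\<dots> = (\<Sum>i<k. \<Sum>j<k. w i * X $$ (i, j) * w j) - a * (\<Sum>i<k. \<Sum>j<k. X $$ (i, j) * w j)
      - a * (\<Sum>i<k. \<Sum>j<k. w i * X $$ (i, j)) + a * a * (\<Sum>i<k. \<Sum>j<k. X $$ (i, j))"
    by (simp add: algebra_simps sum.distrib sum_subtractf sum_distrib_left)
  also have "(\<Sum>i<k. \<Sum>j<k. X $$ (i, j) * w j) = (\<Sum>j<k. C j * w j)"
    unfolding C_def by (subst sum.swap) (simp add: sum_distrib_right)
  also have "(\<Sum>i<k. \<Sum>j<k. w i * X $$ (i, j)) = (\<Sum>i<k. w i * R i)"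
    unfolding R_def by (simp add: sum_distrib_left)
  finally have rhs: "Q n X (Pv k w) = (\<Sum>i<k. \<Sum>j<k. w i * X $$ (i, j) * w j) - a * (\<Sum>j<k. C j * w j)
      - a * (\<Sum>i<k. w i * R i) + a * a * T" unfolding T_def .
  have "Q k (cm k X) w = (\<Sum>i<k. \<Sum>j<k. w i * (X $$ (i, j) - C j / k - R i / k + T / (k * k)) * w j)"
    unfolding Q_def C_def R_def T_def by (intro sum.cong refl) (simp add: cm_idx)
  also have "\<dots> = (\<Sum>i<k. \<Sum>j<k. w i * X $$ (i, j) * w j) - (\<Sum>i<k. \<Sum>j<k. w i * (C j / k) * w j)
     - (\<Sum>i<k. \<Sum>j<k. w i * (R i / k) * w j) + (\<Sum>i<k. \<Sum>j<k. w i * (T / (k * k)) * w j)"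
    by (simp add: algebra_simps sum.distrib sum_subtractf)
  also have "(\<Sum>i<k. \<Sum>j<k. w i * (C j / k) * w j) = a * (\<Sum>j<k. C j * w j)"
    unfolding a_def by (simp add: sum_distrib_left sum_distrib_right sum_divide_distrib algebra_simps)
  also have "(\<Sum>i<k. \<Sum>j<k. w i * (R i / k) * w j) = (\<Sum>i<k. w i * R i * a)"
    unfolding a_def by (intro sum.cong refl) (simp add: sum_distrib_left sum_divide_distrib algebra_simps)
  also have "\<dots> = a * (\<Sum>i<k. w i * R i)"
    by (simp add: sum_distrib_left algebra_simps)
  also have "(\<Sum>i<k. \<Sum>j<k. w i * (T / (k * k)) * w j) = a * a * T"
    unfolding a_def by (simp add: sum_distrib_left sum_distrib_right sum_divide_distrib algebra_simps)
  finally show ?thesis using rhs by simp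
qed

lemma cm_cpsd:
  assumes X: "X \<in> centered_psd n" and kn: "k \<le> n"
  shows "cm k X \<in> centered_psd k"
proof -
  have Xc: "X \<in> carrier_mat n n" and Xs: "\<forall>i<n. \<forall>j<n. X $$ (j, i) = X $$ (i, j)"
    and Xp: "\<forall>f. 0 \<le> Q n X f" using X cpsd_iff by auto
  show ?thesis unfolding cpsd_iff
  proof (intro conjI allI impI cm_carrier)
    fix i j assume i: "i < k" and j: "j < k"
    have "(\<Sum>l<k. X $$ (l, i)) = (\<Sum>l<k. X $$ (i, l))" using Xs i kn by (intro sum.cong refl) auto
    moreover have "(\<Sum>l<k. X $$ (j, l)) = (\<Sum>l<k. X $$ (l, j))" using Xs j kn by (intro sum.cong refl) auto
    moreover have "X $$ (j, i) = X $$ (i, j)" using Xs i j kn by auto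
    ultimately show "cm k X $$ (j, i) = cm k X $$ (i, j)" using i j by (simp add: cm_idx)
  next
    fix w show "0 \<le> Q k (cm k X) w" using Q_cm[OF kn] Xp by simp
  next
    fix i assume i: "i < k"
    then have kpos: "0 < real k" by simp
    have "(\<Sum>j<k. cm k X $$ (i, j)) = (\<Sum>j<k. X $$ (i, j)) - (\<Sum>j<k. \<Sum>l<k. X $$ (l, j)) / k
       - k * ((\<Sum>l<k. X $$ (i, l)) / k) + k * ((\<Sum>l<k. \<Sum>l'<k. X $$ (l, l')) / (k * k))"
      using i by (simp add: cm_idx sum.distrib sum_subtractf sum_divide_distrib)
    also have "(\<Sum>j<k. \<Sum>l<k. X $$ (l, j)) = (\<Sum>l<k. \<Sum>l'<k. X $$ (l, l'))" by (rule sum.swap)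
    finally show "(\<Sum>j<k. cm k X $$ (i, j)) = 0" using kpos by (simp add: field_simps)
  qed
qed

lemma four_idx:
  assumes "Y \<in> carrier_mat k k" "k \<le> n" "i < n" "j < n"
  shows "four_block_mat Y (0\<^sub>m k (n - k)) (0\<^sub>m (n - k) k) (0\<^sub>m (n - k) (n - k)) $$ (i, j)
     = (if i < k \<and> j < k then Y $$ (i, j) else 0)"
  using assms by (simp add: index_mat_four_block)

lemma four_carrier:
  assumes "Y \<in> carrier_mat k k" "k \<le> n"
  shows "four_block_mat Y (0\<^sub>m k (n - k)) (0\<^sub>m (n - k) k) (0\<^sub>m (n - k) (n - k)) \<in> carrier_mat n n"
  using assms by auto

lemma tr_block:
  assumes Yc: "Y \<in> carrier_mat k k" and kn: "k \<le> n" and Xc: "X \<in> carrier_mat n n"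
    and Ys: "\<forall>i<k. \<forall>j<k. Y $$ (j, i) = Y $$ (i, j)" and Yr: "\<forall>i<k. (\<Sum>j<k. Y $$ (i, j)) = 0"
  shows "tr_inner X (four_block_mat Y (0\<^sub>m k (n - k)) (0\<^sub>m (n - k) k) (0\<^sub>m (n - k) (n - k)))
     = tr_inner (cm k X) Y"
proof -
  let ?Y = "four_block_mat Y (0\<^sub>m k (n - k)) (0\<^sub>m (n - k) k) (0\<^sub>m (n - k) (n - k))"
  have "tr_inner X ?Y = (\<Sum>i<n. \<Sum>j<n. X $$ (i, j) * (if j < k \<and> i < k then Y $$ (j, i) else 0))"
    unfolding tr_idx[OF Xc four_carrier[OF Yc kn]] using Yc kn by (intro sum.cong refl) (simp add: four_idx)
  also have "\<dots> = (\<Sum>i<k. \<Sum>j<n. X $$ (i, j) * (if j < k \<and> i < k then Y $$ (j, i) else 0))"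
    using kn by (intro sum.mono_neutral_right) auto
  also have "\<dots> = (\<Sum>i<k. \<Sum>j<k. X $$ (i, j) * Y $$ (j, i))"
    using kn by (intro sum.cong refl sum.mono_neutral_cong_right) auto
  finally have l: "tr_inner X ?Y = (\<Sum>i<k. \<Sum>j<k. X $$ (i, j) * Y $$ (j, i))" .
  define C where "C j = (\<Sum>l<k. X $$ (l, j))" for j
  define R where "R i = (\<Sum>l<k. X $$ (i, l))" for i
  define T where "T = (\<Sum>l<k. \<Sum>l'<k. X $$ (l, l'))"
  have cs: "(\<Sum>i<k. Y $$ (j, i)) = 0" if "j < k" for j using Yr that by auto
  have rs: "(\<Sum>j<k. Y $$ (j, i)) = 0" if "i < k" for i
  proof -
    have "(\<Sum>j<k. Y $$ (j, i)) = (\<Sum>j<k. Y $$ (i, j))" using Ys that by (intro sum.cong refl) auto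
    then show ?thesis using Yr that by simp
  qed
  have "tr_inner (cm k X) Y = (\<Sum>i<k. \<Sum>j<k. (X $$ (i, j) - C j / k - R i / k + T / (k * k)) * Y $$ (j, i))"
    unfolding tr_idx[OF cm_carrier Yc] C_def R_def T_def by (intro sum.cong refl) (simp add: cm_idx)
  also have "\<dots> = (\<Sum>i<k. \<Sum>j<k. X $$ (i, j) * Y $$ (j, i)) - (\<Sum>i<k. \<Sum>j<k. C j / k * Y $$ (j, i))
     - (\<Sum>i<k. \<Sum>j<k. R i / k * Y $$ (j, i)) + (\<Sum>i<k. \<Sum>j<k. T / (k * k) * Y $$ (j, i))"
    by (simp add: algebra_simps sum.distrib sum_subtractf)
  also have "(\<Sum>i<k. \<Sum>j<k. C j / k * Y $$ (j, i)) = (\<Sum>j<k. C j / k * (\<Sum>i<k. Y $$ (j, i)))"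
    by (subst sum.swap) (simp add: sum_distrib_left)
  also have "\<dots> = 0" using cs by simp
  also have "(\<Sum>i<k. \<Sum>j<k. R i / k * Y $$ (j, i)) = (\<Sum>i<k. R i / k * (\<Sum>j<k. Y $$ (j, i)))"
    by (simp add: sum_distrib_left)
  also have "\<dots> = 0" using rs by simp
  also have "(\<Sum>i<k. \<Sum>j<k. T / (k * k) * Y $$ (j, i)) = (\<Sum>i<k. T / (k * k) * (\<Sum>j<k. Y $$ (j, i)))"
    by (simp add: sum_distrib_left)
  also have "\<dots> = 0" using rs by simp
  finally show ?thesis using l by simp
qed

lemma Kmap_idx: "X \<in> carrier_mat n n \<Longrightarrow> i < n \<Longrightarrow> j < n \<Longrightarrow> Kmap X $$ (i, j) = X $$ (i, i) + X $$ (j, j) - 2 * X $$ (i, j)"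
  unfolding Kmap_def by simp

lemma Jmat_idx: "i < k \<Longrightarrow> j < k \<Longrightarrow> Jmat k $$ (i, j) = (if i = j then 1 else 0) - 1 / k"
  unfolding Jmat_def by simp

lemma Jmat_carrier: "Jmat k \<in> carrier_mat k k" unfolding Jmat_def by (rule minus_carrier_mat) simp

lemma sum_delta_l: "i < (k::nat) \<Longrightarrow> (\<Sum>l<k. (if i = l then 1 else 0) * f l) = (f i :: real)"
proof -
  assume i: "i < k"
  have "(\<Sum>l<k. (if i = l then 1 else 0) * f l) = (\<Sum>l<k. if i = l then f i else 0)" by (rule sum.cong) auto
  also have "\<dots> = f i" using i sum.delta'[of "{..<k}" i "\<lambda>_. f i"] by simp
  finally show ?thesis .
qed

lemma sum_delta_r: "j < (k::nat) \<Longrightarrow> (\<Sum>l<k. f l * (if l = j then 1 else 0)) = (f j :: real)"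
proof -
  assume j: "j < k"
  have "(\<Sum>l<k. f l * (if l = j then 1 else 0)) = (\<Sum>l<k. if j = l then f j else 0)" by (rule sum.cong) auto
  also have "\<dots> = f j" using j sum.delta'[of "{..<k}" j "\<lambda>_. f j"] by simp
  finally show ?thesis .
qed

lemma JAJ:
  assumes A: "A \<in> carrier_mat k k" and i: "i < k" and j: "j < k"
  shows "(Jmat k * A * Jmat k) $$ (i, j) = A $$ (i, j) - (\<Sum>l<k. A $$ (l, j)) / k - (\<Sum>l<k. A $$ (i, l)) / k
      + (\<Sum>l<k. \<Sum>l'<k. A $$ (l, l')) / (k * k)"
proof -
  have JA: "(Jmat k * A) $$ (i', j') = A $$ (i', j') - (\<Sum>l<k. A $$ (l, j')) / k" if "i' < k" "j' < k" for i' j'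
  proof -
    have "(Jmat k * A) $$ (i', j') = (\<Sum>l<k. ((if i' = l then 1 else 0) - 1 / k) * A $$ (l, j'))"
      using that A by (simp add: mult_idx[OF Jmat_carrier A] Jmat_idx)
    also have "\<dots> = A $$ (i', j') - (\<Sum>l<k. A $$ (l, j')) / k"
      using that by (simp add: left_diff_distrib sum_subtractf sum_divide_distrib sum_delta_l)
    finally show ?thesis .
  qed
  have JAc: "Jmat k * A \<in> carrier_mat k k" by (rule mult_carrier_mat[OF Jmat_carrier A])
  have "(Jmat k * A * Jmat k) $$ (i, j) = (\<Sum>l<k. (Jmat k * A) $$ (i, l) * ((if l = j then 1 else 0) - 1 / k))"
    using i j by (simp add: mult_idx[OF JAc Jmat_carrier] Jmat_idx)
  also have "\<dots> = (Jmat k * A) $$ (i, j) - (\<Sum>l<k. (Jmat k * A) $$ (i, l)) / k"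
    using j by (simp add: right_diff_distrib sum_subtractf sum_divide_distrib sum_delta_r)
  also have "(\<Sum>l<k. (Jmat k * A) $$ (i, l)) = (\<Sum>l<k. A $$ (i, l)) - (\<Sum>l<k. \<Sum>l'<k. A $$ (l', l)) / k"
    using i by (simp add: JA sum_subtractf sum_divide_distrib)
  also have "(\<Sum>l<k. \<Sum>l'<k. A $$ (l', l)) = (\<Sum>l<k. \<Sum>l'<k. A $$ (l, l'))" by (rule sum.swap)
  also have "(Jmat k * A) $$ (i, j) - ((\<Sum>l<k. A $$ (i, l)) - (\<Sum>l<k. \<Sum>l'<k. A $$ (l, l')) / k) / k
     = A $$ (i, j) - (\<Sum>l<k. A $$ (l, j)) / k - (\<Sum>l<k. A $$ (i, l)) / k
      + (\<Sum>l<k. \<Sum>l'<k. A $$ (l, l')) / (k * k)"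
    using i j by (simp add: JA diff_divide_distrib)
  finally show ?thesis .
qed

lemma cm_Kdag:
  assumes Xc: "X \<in> carrier_mat n n" and Xs: "\<forall>i<n. \<forall>j<n. X $$ (j, i) = X $$ (i, j)"
    and kn: "k \<le> n" and Kd: "\<forall>i j. i < j \<and> j < k \<longrightarrow> Kmap X $$ (i, j) = d (i, j)"
  shows "cm k X = Kdag k (d_alpha k d)"
proof -
  let ?A = "mat k k (\<lambda>(i, j). X $$ (i, i) + X $$ (j, j) - 2 * X $$ (i, j))"
  have Ac: "?A \<in> carrier_mat k k" by simp
  have da: "d_alpha k d = ?A"
  proof (rule eq_matI)
    fix i j assume i: "i < dim_row ?A" and j: "j < dim_col ?A"
    then have i': "i < k" "i < n" and j': "j < k" "j < n" using kn by auto
    consider "i < j" | "j < i" | "i = j" by linarith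
    then show "d_alpha k d $$ (i, j) = ?A $$ (i, j)"
    proof cases
      case 1
      then have "d (i, j) = X $$ (i, i) + X $$ (j, j) - 2 * X $$ (i, j)"
        using Kd[rule_format, of i j] i' j' Kmap_idx[OF Xc, of i j] by auto
      then show ?thesis using 1 i' j' unfolding d_alpha_def by auto
    next
      case 2
      then have "d (j, i) = X $$ (i, i) + X $$ (j, j) - 2 * X $$ (i, j)"
        using Kd[rule_format, of j i] i' j' Kmap_idx[OF Xc, of j i] Xs by auto
      then show ?thesis using 2 i' j' unfolding d_alpha_def by auto
    qed (use i' in \<open>auto simp: d_alpha_def\<close>)
  qed (auto simp: d_alpha_def)
  have JAJc: "Jmat k * ?A * Jmat k \<in> carrier_mat k k"
    by (rule mult_carrier_mat[OF mult_carrier_mat[OF Jmat_carrier Ac] Jmat_carrier])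
  show ?thesis
  proof (rule eq_matI)
    fix i j assume "i < dim_row (Kdag k (d_alpha k d))" "j < dim_col (Kdag k (d_alpha k d))"
    then have i: "i < k" and j: "j < k" using JAJc unfolding Kdag_def da by auto
    then have kpos: "0 < real k" by simp
    define tX where "tX = (\<Sum>l<k. X $$ (l, l))"
    define C where "C = (\<Sum>l<k. X $$ (l, j))"
    define R where "R = (\<Sum>l<k. X $$ (i, l))"
    define T where "T = (\<Sum>l<k. \<Sum>l'<k. X $$ (l, l'))"
    have s1: "(\<Sum>l<k. ?A $$ (l, j)) = tX + k * X $$ (j, j) - 2 * C"
      using j unfolding tX_def C_def by (simp add: sum.distrib sum_subtractf sum_distrib_left)
    have s2: "(\<Sum>l<k. ?A $$ (i, l)) = k * X $$ (i, i) + tX - 2 * R"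
      using i unfolding tX_def R_def by (simp add: sum.distrib sum_subtractf sum_distrib_left)
    have s3: "(\<Sum>l<k. \<Sum>l'<k. ?A $$ (l, l')) = k * tX + k * tX - 2 * T"
      unfolding tX_def T_def by (simp add: sum.distrib sum_subtractf sum_distrib_left)
    have "Kdag k (d_alpha k d) $$ (i, j) = - 1 / 2 * (Jmat k * ?A * Jmat k) $$ (i, j)"
    proof -
      have dr: "dim_row (Jmat k * ?A * Jmat k) = k" "dim_col (Jmat k * ?A * Jmat k) = k" using JAJc by auto
      show ?thesis unfolding Kdag_def da
        using index_smult_mat(1)[of i "Jmat k * ?A * Jmat k" j "-1/2"] dr i j by simp
    qed
    also have "\<dots> = - 1 / 2 * ((X $$ (i, i) + X $$ (j, j) - 2 * X $$ (i, j)) - (tX + k * X $$ (j, j) - 2 * C) / k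
        - (k * X $$ (i, i) + tX - 2 * R) / k + (k * tX + k * tX - 2 * T) / (k * k))"
      unfolding JAJ[OF Ac i j] s1 s2 s3 using i j by simp
    also have "\<dots> = X $$ (i, j) - C / k - R / k + T / (k * k)"
      using kpos by (simp add: field_simps)
    also have "\<dots> = cm k X $$ (i, j)" unfolding C_def R_def T_def cm_idx[OF i j] by simp
    finally show "cm k X $$ (i, j) = Kdag k (d_alpha k d) $$ (i, j)" by simp
  qed (use JAJc in \<open>auto simp: Kdag_def da cm_def\<close>)
qed

lemma Q_par: "Q n A (\<lambda>i. f i + g i) + Q n A (\<lambda>i. f i - g i) = 2 * Q n A f + 2 * Q n A g"
proof -
  have "Q n A (\<lambda>i. f i + g i) + Q n A (\<lambda>i. f i - g i)
     = (\<Sum>i<n. \<Sum>j<n. (f i + g i) * A $$ (i, j) * (f j + g j) + (f i - g i) * A $$ (i, j) * (f j - g j))"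
    unfolding Q_def by (simp add: sum.distrib)
  also have "\<dots> = (\<Sum>i<n. \<Sum>j<n. 2 * (f i * A $$ (i, j) * f j) + 2 * (g i * A $$ (i, j) * g j))"
    by (intro sum.cong refl) (simp add: algebra_simps)
  also have "\<dots> = 2 * Q n A f + 2 * Q n A g"
    unfolding Q_def by (simp add: sum.distrib sum_distrib_left)
  finally show ?thesis .
qed

lemma Q_par_le: "\<forall>h. 0 \<le> Q n A h \<Longrightarrow> Q n A (\<lambda>i. f i + g i) \<le> 2 * Q n A f + 2 * Q n A g"
  using Q_par[of n A f g] by (metis le_add_same_cancel1)

lemma Q_neg: "Q n A (\<lambda>i. - f i) = Q n A f"
  unfolding Q_def by simp

lemma Q_shift:
  assumes A: "A \<in> centered_psd n"
  shows "Q n A (\<lambda>i. f i + t) = Q n A f"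
proof -
  have As: "\<forall>i<n. \<forall>j<n. A $$ (j, i) = A $$ (i, j)" and Ar: "\<forall>i<n. (\<Sum>j<n. A $$ (i, j)) = 0"
    using A cpsd_iff by auto
  have Ac: "(\<Sum>i<n. A $$ (i, j)) = 0" if "j < n" for j
  proof -
    have "(\<Sum>i<n. A $$ (i, j)) = (\<Sum>i<n. A $$ (j, i))" using As that by (intro sum.cong refl) auto
    then show ?thesis using Ar that by simp
  qed
  have "Q n A (\<lambda>i. f i + t) = (\<Sum>i<n. \<Sum>j<n. f i * A $$ (i, j) * f j + t * (A $$ (i, j) * f j)
       + t * f i * A $$ (i, j) + t * t * A $$ (i, j))"
    unfolding Q_def by (intro sum.cong refl) (simp add: algebra_simps)
  also have "\<dots> = Q n A f + t * (\<Sum>i<n. \<Sum>j<n. A $$ (i, j) * f j) + t * (\<Sum>i<n. f i * (\<Sum>j<n. A $$ (i, j)))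
       + t * t * (\<Sum>i<n. (\<Sum>j<n. A $$ (i, j)))"
    unfolding Q_def by (simp add: sum.distrib sum_distrib_left algebra_simps)
  also have "(\<Sum>i<n. \<Sum>j<n. A $$ (i, j) * f j) = (\<Sum>j<n. (\<Sum>i<n. A $$ (i, j)) * f j)"
    by (subst sum.swap) (simp add: sum_distrib_right)
  also have "\<dots> = 0" using Ac by simp
  also have "(\<Sum>i<n. f i * (\<Sum>j<n. A $$ (i, j))) = 0" using Ar by simp
  also have "(\<Sum>i<n. (\<Sum>j<n. A $$ (i, j))) = 0" using Ar by simp
  finally show ?thesis by simp
qed

lemma avg_le: "a \<le> (b + c) / 2 \<Longrightarrow> b \<le> R \<Longrightarrow> c \<le> R \<Longrightarrow> a \<le> (R::real)" by (simp add: field_simps)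

lemma Q_bound: "Q n A f \<le> (\<Sum>i<n. \<Sum>j<n. \<bar>A $$ (i, j)\<bar>) * (\<Sum>l<n. (f l)^2)"
proof -
  let ?R = "\<Sum>l<n. (f l)^2"
  have fi: "(f i)^2 \<le> ?R" if "i < n" for i
    using that by (intro member_le_sum) auto
  have "f i * A $$ (i, j) * f j \<le> \<bar>A $$ (i, j)\<bar> * ?R" if "i < n" "j < n" for i j
  proof -
    have "\<bar>f i * f j\<bar> \<le> ((f i)^2 + (f j)^2) / 2"
      using sum_squares_bound[of "\<bar>f i\<bar>" "\<bar>f j\<bar>"] by (simp add: abs_mult)
    then have "\<bar>f i * f j\<bar> \<le> ?R" using fi[OF that(1)] fi[OF that(2)] avg_le by blast
    then have "\<bar>A $$ (i, j)\<bar> * \<bar>f i * f j\<bar> \<le> \<bar>A $$ (i, j)\<bar> * ?R" by (intro mult_left_mono) auto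
    moreover have "f i * A $$ (i, j) * f j \<le> \<bar>A $$ (i, j)\<bar> * \<bar>f i * f j\<bar>"
      by (metis abs_ge_self abs_mult mult.commute mult.left_commute)
    ultimately show ?thesis by linarith
  qed
  then have "Q n A f \<le> (\<Sum>i<n. \<Sum>j<n. \<bar>A $$ (i, j)\<bar> * ?R)"
    unfolding Q_def by (intro sum_mono) auto
  also have "\<dots> = (\<Sum>i<n. \<Sum>j<n. \<bar>A $$ (i, j)\<bar>) * ?R" by (simp add: sum_distrib_right)
  finally show ?thesis .
qed

lemma split_sum: "k \<le> (n::nat) \<Longrightarrow> (\<Sum>l<n. g l) = (\<Sum>l<k. g l) + (\<Sum>l=k..<n. g l)"
  using sum.atLeastLessThan_concat[of 0 k n g] by (simp add: atLeast0LessThan)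

lemma cs_sum:
  fixes f :: "nat \<Rightarrow> real"
  assumes "finite A"
  shows "(\<Sum>i\<in>A. f i)^2 \<le> real (card A) * (\<Sum>i\<in>A. (f i)^2)"
proof (cases "A = {}")
  case True then show ?thesis by simp
next
  case False
  then have cp: "0 < real (card A)" using assms by (simp add: card_gt_0_iff)
  define m where "m = (\<Sum>i\<in>A. f i) / card A"
  have "0 \<le> (\<Sum>i\<in>A. (f i - m)^2)" by (intro sum_nonneg) auto
  also have "\<dots> = (\<Sum>i\<in>A. (f i)^2 - (2 * m) * f i + m^2)"
    by (intro sum.cong refl) (simp add: power2_diff algebra_simps)
  also have "\<dots> = (\<Sum>i\<in>A. (f i)^2) - 2 * m * (\<Sum>i\<in>A. f i) + card A * m^2"
    by (simp add: sum.distrib sum_subtractf sum_distrib_left[symmetric])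
  also have "\<dots> = (\<Sum>i\<in>A. (f i)^2) - (\<Sum>i\<in>A. f i)^2 / card A"
    using cp unfolding m_def by (simp add: field_simps power2_eq_square)
  finally show ?thesis using cp by (simp add: field_simps)
qed




lemma R_bound:
  fixes y :: "nat \<Rightarrow> real"
  assumes kn: "k \<le> n" and y0: "(\<Sum>l<n. y l) = 0"
  shows "(\<Sum>l<n. ((\<lambda>i. if i < k then (\<Sum>l<k. y l) / k else y i) l)^2)
     \<le> (n + 1) * (\<Sum>l<n. ((if k \<le> l then 1 else 0) * y l)^2)"
proof -
  define s where "s = (\<Sum>l<k. y l) / k"
  define B where "B = (\<Sum>l=k..<n. (y l)^2)"
  have B0: "0 \<le> B" unfolding B_def by (intro sum_nonneg) auto
  have R: "(\<Sum>l<n. ((\<lambda>i. if i < k then (\<Sum>l<k. y l) / k else y i) l)^2) = k * s^2 + B"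
    unfolding split_sum[OF kn] s_def B_def by simp
  have Bq: "(\<Sum>l<n. ((if k \<le> l then 1 else 0) * y l)^2) = B"
    unfolding split_sum[OF kn] B_def by simp
  have sy: "(\<Sum>l<k. y l) = - (\<Sum>l=k..<n. y l)" using y0 split_sum[OF kn, of y] by simp
  have ks: "k * s^2 \<le> n * B"
  proof (cases "k = 0")
    case True then show ?thesis using B0 by simp
  next
    case False
    then have k1: "1 \<le> real k" by simp
    have "k * s^2 = (\<Sum>l<k. y l)^2 / k" unfolding s_def using False by (simp add: power2_eq_square)
    also have "\<dots> \<le> (\<Sum>l<k. y l)^2"
    proof -
      have "(\<Sum>l<k. y l)^2 * 1 \<le> (\<Sum>l<k. y l)^2 * k" using k1 by (intro mult_left_mono) auto
      moreover have "0 < real k" using k1 by simp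
      ultimately show ?thesis by (simp add: pos_divide_le_eq)
    qed
    also have "\<dots> = (\<Sum>l=k..<n. y l)^2" unfolding sy by simp
    also have "\<dots> \<le> real (card {k..<n}) * B" unfolding B_def by (rule cs_sum) simp
    also have "\<dots> \<le> n * B" using B0 by (intro mult_right_mono) auto
    finally show ?thesis .
  qed
  show ?thesis unfolding R Bq using ks by (simp add: algebra_simps)
qed

lemma main_est:
  assumes X: "X \<in> centered_psd n" and Z: "Z0 \<in> centered_psd n" and kn: "k \<le> n" and c: "0 \<le> c"
    and h: "\<forall>w. Q n X (Pv k w) \<le> c * Q n Z0 (Pv k w)"
  shows "\<exists>K\<ge>0. \<forall>x. Q n X x \<le> K * (Q n Z0 x + (\<Sum>l<n. ((if k \<le> l then 1 else 0) * (x l - (\<Sum>i<n. x i) / n))^2))"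
proof -
  have Xp: "\<forall>f. 0 \<le> Q n X f" and Zp: "\<forall>f. 0 \<le> Q n Z0 f" using X Z cpsd_iff by auto
  define NX where "NX = (\<Sum>i<n. \<Sum>j<n. \<bar>X $$ (i, j)\<bar>)"
  define N0 where "N0 = (\<Sum>i<n. \<Sum>j<n. \<bar>Z0 $$ (i, j)\<bar>)"
  have NX0: "0 \<le> NX" and N00: "0 \<le> N0" unfolding NX_def N0_def by (auto intro!: sum_nonneg)
  define K where "K = 4 * c + (4 * c * N0 + 2 * NX) * (n + 1)"
  have L0: "0 \<le> (4 * c * N0 + 2 * NX) * (n + 1)" using c NX0 N00 by simp
  show ?thesis
  proof (intro exI[of _ K] conjI allI)
    show "0 \<le> K" unfolding K_def using L0 c by simp
    fix x :: "nat \<Rightarrow> real"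
    define xb where "xb = (\<Sum>i<n. x i) / n"
    define y where "y = (\<lambda>i. x i - xb)"
    define Bq where "Bq = (\<Sum>l<n. ((if k \<le> l then 1 else 0) * (x l - xb))^2)"
    define s where "s = (\<Sum>l<k. y l) / k"
    define p where "p = Pv k y"
    define r where "r = (\<lambda>i. if i < k then s else y i)"
    define R where "R = (\<Sum>l<n. (r l)^2)"
    have xy: "x = (\<lambda>i. y i + xb)" by (simp add: y_def)
    have e1: "Q n X x = Q n X y" using Q_shift[OF X, of y xb] xy by simp
    have e1z: "Q n Z0 x = Q n Z0 y" using Q_shift[OF Z, of y xb] xy by simp
    have ypr: "y = (\<lambda>i. p i + r i)" by (auto simp: p_def r_def Pv_def s_def)
    have prn: "p = (\<lambda>i. y i + - r i)" by (auto simp: p_def r_def Pv_def s_def)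
    have a1: "Q n X y \<le> 2 * Q n X p + 2 * Q n X r" using Q_par_le[OF Xp, of p r] ypr by simp
    have a2: "Q n X p \<le> c * Q n Z0 p" using h p_def by simp
    have a3: "Q n Z0 p \<le> 2 * Q n Z0 y + 2 * Q n Z0 r"
      using Q_par_le[OF Zp, of y "\<lambda>i. - r i"] prn Q_neg[of n Z0 r] by simp
    have a4: "Q n X r \<le> NX * R" "Q n Z0 r \<le> N0 * R" using Q_bound unfolding NX_def N0_def R_def by auto
    have y0: "(\<Sum>l<n. y l) = 0"
    proof (cases "n = 0")
      case False
      then show ?thesis unfolding y_def xb_def by (simp add: sum_subtractf)
    qed simp
    have a5: "R \<le> (n + 1) * Bq"
      using R_bound[OF kn y0] unfolding R_def r_def s_def Bq_def y_def by (simp add: ac_simps)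
    have R0: "0 \<le> R" unfolding R_def by (intro sum_nonneg) auto
    have Bq0: "0 \<le> Bq" unfolding Bq_def by (intro sum_nonneg) auto
    have QZ0: "0 \<le> Q n Z0 x" using Zp by simp
    have "c * Q n Z0 p \<le> c * (2 * Q n Z0 x + 2 * (N0 * R))"
      using a3 a4 e1z c by (intro mult_left_mono) auto
    then have "Q n X x \<le> 4 * c * Q n Z0 x + (4 * c * N0 + 2 * NX) * R"
      using e1 a1 a2 a4 by (simp add: algebra_simps)
    also have "\<dots> \<le> 4 * c * Q n Z0 x + (4 * c * N0 + 2 * NX) * ((n + 1) * Bq)"
      using a5 c NX0 N00 by (intro add_left_mono mult_left_mono) auto
    also have "\<dots> \<le> K * (Q n Z0 x + Bq)"
    proof -
      have "4 * c * Q n Z0 x \<le> K * Q n Z0 x" unfolding K_def using QZ0 L0 by (intro mult_right_mono) auto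
      moreover have "(4 * c * N0 + 2 * NX) * ((n + 1) * Bq) \<le> K * Bq" unfolding K_def using Bq0 c
        by (simp add: algebra_simps)
      ultimately show ?thesis by (simp add: algebra_simps)
    qed
    finally show "Q n X x \<le> K * (Q n Z0 x + (\<Sum>l<n. ((if k \<le> l then 1 else 0) * (x l - (\<Sum>i<n. x i) / n))^2))"
      unfolding Bq_def xb_def .
  qed
qed

definition gk :: "nat \<Rightarrow> nat \<Rightarrow> nat \<Rightarrow> nat \<Rightarrow> real" where
  "gk n k l i = (if k \<le> l then 1 else 0) * ((if l = i then 1 else 0) - 1 / n)"

definition Mmat :: "nat \<Rightarrow> nat \<Rightarrow> real mat" where
  "Mmat n k = mat n n (\<lambda>(i, j). \<Sum>l<n. gk n k l i * gk n k l j)"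

lemma gk_sum: "l < n \<Longrightarrow> (\<Sum>i<n. x i * gk n k l i) = (if k \<le> l then 1 else 0) * (x l - (\<Sum>i<n. x i) / n)"
proof -
  assume l: "l < n"
  have "(\<Sum>i<n. x i * gk n k l i) = (if k \<le> l then 1 else 0) * ((\<Sum>i<n. x i * (if l = i then 1 else 0)) - (\<Sum>i<n. x i) / n)"
    unfolding gk_def by (simp add: sum_distrib_left sum_subtractf sum_divide_distrib algebra_simps)
  also have "(\<Sum>i<n. x i * (if l = i then 1 else 0)) = x l"
    using sum_delta_r[OF l, of x] by (simp add: eq_commute)
  finally show ?thesis .
qed

lemma gk_sum1: "l < n \<Longrightarrow> (\<Sum>j<n. gk n k l j) = 0"
  using gk_sum[of l n "\<lambda>_. 1" k] by simp

lemma M_carrier: "Mmat n k \<in> carrier_mat n n" unfolding Mmat_def by simp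

lemma M_Q: "Q n (Mmat n k) x = (\<Sum>l<n. ((if k \<le> l then 1 else 0) * (x l - (\<Sum>i<n. x i) / n))^2)"
proof -
  have "Q n (Mmat n k) x = (\<Sum>i<n. \<Sum>j<n. \<Sum>l<n. (x i * gk n k l i) * (x j * gk n k l j))"
    unfolding Q_def Mmat_def by (intro sum.cong refl) (simp add: sum_distrib_left sum_distrib_right algebra_simps)
  also have "\<dots> = (\<Sum>i<n. \<Sum>l<n. \<Sum>j<n. (x i * gk n k l i) * (x j * gk n k l j))"
    by (rule sum.cong[OF refl], rule sum.swap)
  also have "\<dots> = (\<Sum>l<n. \<Sum>i<n. \<Sum>j<n. (x i * gk n k l i) * (x j * gk n k l j))"
    by (rule sum.swap)
  also have "\<dots> = (\<Sum>l<n. (\<Sum>i<n. x i * gk n k l i) * (\<Sum>j<n. x j * gk n k l j))"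
    by (simp add: sum_product)
  also have "\<dots> = (\<Sum>l<n. ((if k \<le> l then 1 else 0) * (x l - (\<Sum>i<n. x i) / n))^2)"
    by (intro sum.cong refl) (simp add: gk_sum power2_eq_square)
  finally show ?thesis .
qed

lemma M_cpsd: "Mmat n k \<in> centered_psd n"
  unfolding cpsd_iff
proof (intro conjI allI impI M_carrier)
  fix i j assume "i < n" "j < n"
  then show "Mmat n k $$ (j, i) = Mmat n k $$ (i, j)" unfolding Mmat_def by (simp add: mult.commute)
next
  fix f show "0 \<le> Q n (Mmat n k) f" unfolding M_Q by (intro sum_nonneg) auto
next
  fix i assume i: "i < n"
  have "(\<Sum>j<n. Mmat n k $$ (i, j)) = (\<Sum>j<n. \<Sum>l<n. gk n k l i * gk n k l j)"
    unfolding Mmat_def using i by simp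
  also have "\<dots> = (\<Sum>l<n. gk n k l i * (\<Sum>j<n. gk n k l j))"
    by (subst sum.swap) (simp add: sum_distrib_left)
  also have "\<dots> = 0" by (simp add: gk_sum1)
  finally show "(\<Sum>j<n. Mmat n k $$ (i, j)) = 0" .
qed

lemma M_Kmap: "k \<le> n \<Longrightarrow> i < k \<Longrightarrow> j < k \<Longrightarrow> Kmap (Mmat n k) $$ (i, j) = 0"
proof -
  assume kn: "k \<le> n" and i: "i < k" and j: "j < k"
  have g: "gk n k l a = - (if k \<le> l then 1 else 0) / n" if "a < k" for l a
    using that unfolding gk_def by auto
  have e: "Mmat n k $$ (a, b) = (\<Sum>l<n. ((if k \<le> l then 1 else 0) / n)^2)" if "a < k" "b < k" for a b
    unfolding Mmat_def using that kn by (simp add: g power2_eq_square)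
  have "Kmap (Mmat n k) $$ (i, j) = Mmat n k $$ (i, i) + Mmat n k $$ (j, j) - 2 * Mmat n k $$ (i, j)"
    using Kmap_idx[OF M_carrier[of n k], of i j] i j kn by simp
  then show ?thesis using i j e[of i i] e[of j j] e[of i j] by simp
qed

lemma aux_comb:
  fixes t qa qb a b q :: real
  assumes t: "0 \<le> t" "t \<le> 1" and A: "qa \<le> a * q" and B: "qb \<le> b * q" and a: "0 \<le> a" and b: "0 \<le> b" and q: "0 \<le> q"
  shows "(1 - t) * qa + t * qb \<le> (a + b) * q"
proof -
  have "(1 - t) * qa \<le> (1 - t) * (a * q)" using A t by (intro mult_left_mono) auto
  also have "\<dots> \<le> a * q" using t a q by (simp add: mult_left_le_one_le)
  finally have 1: "(1 - t) * qa \<le> a * q" .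
  have "t * qb \<le> t * (b * q)" using B t by (intro mult_left_mono) auto
  also have "\<dots> \<le> b * q" using t b q by (simp add: mult_left_le_one_le)
  finally have 2: "t * qb \<le> b * q" .
  show ?thesis using 1 2 by (simp add: algebra_simps)
qed

lemma G_face:
  assumes D: "D \<in> centered_psd k"
  shows "is_face (centered_psd k) {A \<in> centered_psd k. \<exists>c\<ge>0. \<forall>w. Q k A w \<le> c * Q k D w}"
    (is "is_face ?S ?G")
proof -
  have Dp: "\<forall>w. 0 \<le> Q k D w" using D cpsd_iff by auto
  have comb: "seg_pt t A B \<in> ?G" if A: "A \<in> ?S" and B: "B \<in> ?S" and t: "0 \<le> t" "t \<le> 1"
    and ca: "0 \<le> a" "\<forall>w. Q k A w \<le> a * Q k D w" and cb: "0 \<le> b" "\<forall>w. Q k B w \<le> b * Q k D w" for A B t a b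
  proof -
    have "seg_pt t A B \<in> ?S" using cpsd_seg A B t by auto
    moreover have "\<forall>w. Q k (seg_pt t A B) w \<le> (a + b) * Q k D w"
    proof
      fix w
      show "Q k (seg_pt t A B) w \<le> (a + b) * Q k D w"
        unfolding Q_seg[OF cpsd_carrier[OF A] cpsd_carrier[OF B]]
        by (rule aux_comb) (use t ca cb Dp in auto)
    qed
    ultimately show ?thesis using ca cb by (intro CollectI conjI exI[of _ "a + b"]) auto
  qed
  show ?thesis unfolding is_face_def
  proof (intro conjI ballI impI allI)
    show "?G \<subseteq> ?S" by blast
    show "convex_mats ?G" unfolding convex_mats_def
    proof (intro ballI allI impI)
      fix A B and t :: real assume A: "A \<in> ?G" and B: "B \<in> ?G" and t: "0 \<le> t \<and> t \<le> 1"
      from A obtain a where "A \<in> ?S" "0 \<le> a" "\<forall>w. Q k A w \<le> a * Q k D w" by blast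
      moreover from B obtain b where "B \<in> ?S" "0 \<le> b" "\<forall>w. Q k B w \<le> b * Q k D w" by blast
      ultimately show "seg_pt t A B \<in> ?G" using comb t by blast
    qed
  next
    fix A B and t :: real assume A: "A \<in> ?S" and B: "B \<in> ?S" and ex: "\<exists>t. 0 < t \<and> t < 1 \<and> seg_pt t A B \<in> ?G"
      and t: "0 \<le> t \<and> t \<le> 1"
    from ex obtain t0 c where t0: "0 < t0" "t0 < 1" and c: "0 \<le> c" and hc: "\<forall>w. Q k (seg_pt t0 A B) w \<le> c * Q k D w"
      by blast
    have Ap: "\<forall>w. 0 \<le> Q k A w" and Bp: "\<forall>w. 0 \<le> Q k B w" using A B cpsd_iff by auto
    have hA: "\<forall>w. Q k A w \<le> (c / (1 - t0)) * Q k D w"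
    proof
      fix w
      have "(1 - t0) * Q k A w + t0 * Q k B w \<le> c * Q k D w"
        using hc Q_seg[OF cpsd_carrier[OF A] cpsd_carrier[OF B]] by metis
      moreover have "0 \<le> t0 * Q k B w" using Bp t0 by simp
      ultimately have "(1 - t0) * Q k A w \<le> c * Q k D w" by linarith
      then show "Q k A w \<le> (c / (1 - t0)) * Q k D w" using t0 by (simp add: field_simps)
    qed
    have hB: "\<forall>w. Q k B w \<le> (c / t0) * Q k D w"
    proof
      fix w
      have "(1 - t0) * Q k A w + t0 * Q k B w \<le> c * Q k D w"
        using hc Q_seg[OF cpsd_carrier[OF A] cpsd_carrier[OF B]] by metis
      moreover have "0 \<le> (1 - t0) * Q k A w" using Ap t0 by simp
      ultimately have "t0 * Q k B w \<le> c * Q k D w" by linarith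
      then show "Q k B w \<le> (c / t0) * Q k D w" using t0 by (simp add: field_simps)
    qed
    show "seg_pt t A B \<in> ?G" by (rule comb[OF A B _ _ _ hA _ hB]) (use t t0 c in auto)
  qed
qed




lemma tr_nonneg:
  assumes Y: "Y \<in> centered_psd k" and H: "is_face (centered_psd k) {A \<in> centered_psd k. tr_inner A Y = 0}"
    and A: "A \<in> centered_psd k"
  shows "0 \<le> tr_inner A Y"
proof (rule ccontr)
  assume neg: "\<not> 0 \<le> tr_inner A Y"
  have Yc: "Y \<in> carrier_mat k k" and Ys: "\<forall>i<k. \<forall>j<k. Y $$ (j, i) = Y $$ (i, j)" using Y cpsd_iff by auto
  have Ac: "A \<in> carrier_mat k k" using A cpsd_carrier by auto
  define a where "a = tr_inner A Y"
  define b where "b = tr_inner Y Y"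
  have bsq: "b = (\<Sum>i<k. \<Sum>j<k. (Y $$ (i, j))^2)"
    unfolding b_def tr_idx[OF Yc Yc] using Ys by (intro sum.cong refl) (auto simp: power2_eq_square)
  have b0: "0 \<le> b" unfolding bsq by (intro sum_nonneg) auto
  have bpos: "0 < b"
  proof (rule ccontr)
    assume "\<not> 0 < b"
    then have "b = 0" using b0 by simp
    then have "\<forall>i\<in>{..<k}. (\<Sum>j<k. (Y $$ (i, j))^2) = 0" unfolding bsq
      by (subst sum_nonneg_eq_0_iff[symmetric]) (auto intro!: sum_nonneg)
    then have "\<forall>i<k. \<forall>j<k. Y $$ (i, j) = 0" by (simp add: sum_nonneg_eq_0_iff)
    then have "tr_inner A Y = 0" unfolding tr_idx[OF Ac Yc] by simp
    then show False using neg by simp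
  qed
  have a0: "a < 0" using neg a_def by simp
  define t where "t = - a / (b - a)"
  have ba: "0 < b - a" using a0 bpos by simp
  have t1: "t < 1" unfolding t_def by (subst divide_less_eq_1_pos[OF ba]) (use bpos in simp)
  have t0': "0 < t" unfolding t_def using divide_pos_pos[of "-a" "b-a"] a0 ba by simp
  have t: "0 < t" "t < 1" using t0' t1 by auto
  have "tr_inner (seg_pt t A Y) Y = (1 - t) * a + t * b" unfolding a_def b_def by (rule tr_seg[OF Ac Yc Yc])
  also have "\<dots> = a + t * (b - a)" by (simp add: algebra_simps)
  also have "t * (b - a) = - a" unfolding t_def using ba by simp
  also have "a + - a = 0" by simp
  finally have "seg_pt t A Y \<in> {A \<in> centered_psd k. tr_inner A Y = 0}"
    using cpsd_seg[OF A Y] t by auto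
  then have ex: "\<exists>t. 0 < t \<and> t < 1 \<and> seg_pt t A Y \<in> {A \<in> centered_psd k. tr_inner A Y = 0}"
    using t by blast
  have ext: "\<forall>X\<in>centered_psd k. \<forall>Z\<in>centered_psd k. (\<exists>t. 0 < t \<and> t < 1 \<and> seg_pt t X Z \<in> {A \<in> centered_psd k. tr_inner A Y = 0}) \<longrightarrow>
        (\<forall>t. 0 \<le> t \<and> t \<le> 1 \<longrightarrow> seg_pt t X Z \<in> {A \<in> centered_psd k. tr_inner A Y = 0})"
    using H unfolding is_face_def by (elim conjE)
  have "seg_pt 0 A Y \<in> {A \<in> centered_psd k. tr_inner A Y = 0}"
    using ext[rule_format, OF A Y ex, of 0] by simp
  moreover have "seg_pt 0 A Y = A" unfolding seg_pt_def using Ac Yc by (intro eq_matI) auto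
  ultimately show False using neg by simp
qed




lemma block_Q:
  assumes Yc: "Y \<in> carrier_mat k k" and kn: "k \<le> n"
  shows "Q n (four_block_mat Y (0\<^sub>m k (n - k)) (0\<^sub>m (n - k) k) (0\<^sub>m (n - k) (n - k))) f = Q k Y f"
proof -
  have "Q n (four_block_mat Y (0\<^sub>m k (n - k)) (0\<^sub>m (n - k) k) (0\<^sub>m (n - k) (n - k))) f
      = (\<Sum>i<n. \<Sum>j<n. f i * (if i < k \<and> j < k then Y $$ (i, j) else 0) * f j)"
    unfolding Q_def by (intro sum.cong refl) (simp add: four_idx[OF Yc kn])
  also have "\<dots> = (\<Sum>i<k. \<Sum>j<n. f i * (if i < k \<and> j < k then Y $$ (i, j) else 0) * f j)"
    using kn by (intro sum.mono_neutral_right) auto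
  also have "\<dots> = Q k Y f"
    unfolding Q_def using kn by (intro sum.cong refl sum.mono_neutral_cong_right) auto
  finally show ?thesis .
qed

lemma block_rows:
  assumes Yc: "Y \<in> carrier_mat k k" and kn: "k \<le> n" and Yr: "\<forall>i<k. (\<Sum>j<k. Y $$ (i, j)) = 0" and i: "i < n"
  shows "(\<Sum>j<n. four_block_mat Y (0\<^sub>m k (n - k)) (0\<^sub>m (n - k) k) (0\<^sub>m (n - k) (n - k)) $$ (i, j)) = 0"
proof -
  have "(\<Sum>j<n. four_block_mat Y (0\<^sub>m k (n - k)) (0\<^sub>m (n - k) k) (0\<^sub>m (n - k) (n - k)) $$ (i, j))
      = (\<Sum>j<n. (if i < k \<and> j < k then Y $$ (i, j) else 0))"
    using i by (intro sum.cong refl) (simp add: four_idx[OF Yc kn])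
  also have "\<dots> = (\<Sum>j<k. (if i < k \<and> j < k then Y $$ (i, j) else 0))"
    using kn by (intro sum.mono_neutral_right) auto
  also have "\<dots> = 0" using Yr by (cases "i < k") auto
  finally show ?thesis .
qed

lemma Kmap_add: "A \<in> carrier_mat n n \<Longrightarrow> B \<in> carrier_mat n n \<Longrightarrow> i < n \<Longrightarrow> j < n \<Longrightarrow>
  Kmap (A + B) $$ (i, j) = Kmap A $$ (i, j) + Kmap B $$ (i, j)"
proof -
  assume A: "A \<in> carrier_mat n n" and B: "B \<in> carrier_mat n n" and i: "i < n" and j: "j < n"
  have c: "A + B \<in> carrier_mat n n" using A B by simp
  show ?thesis unfolding Kmap_idx[OF c i j] Kmap_idx[OF A i j] Kmap_idx[OF B i j]
    using A B i j by simp
qed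

theorem theorem3p1:
  fixes n k :: nat and E :: "(nat \<times> nat) set" and d :: "nat \<times> nat \<Rightarrow> real"
    and Yhat :: "real mat"
  assumes E_sub: "E \<subseteq> {(i, j). i < j \<and> j < n}"
    and d_nonneg: "\<forall>e\<in>E. 0 \<le> d e"
    and k_le: "k \<le> n"
    and clique: "\<forall>i j. i < j \<and> j < k \<longrightarrow> (i, j) \<in> E"
    and nonempty: "{X \<in> centered_psd n. \<forall>i j. i < j \<and> j < k \<longrightarrow> Kmap X $$ (i, j) = d (i, j)} \<noteq> {}"
    and Yhat_sym: "Yhat \<in> sym_mats k"
    and Yhat_exp: "exposes k Yhat (face_hull (centered_psd k) {Kdag k (d_alpha k d)})"
  shows "exposes n (four_block_mat Yhat (0\<^sub>m k (n - k)) (0\<^sub>m (n - k) k) (0\<^sub>m (n - k) (n - k)))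
           (face_hull (centered_psd n)
              {X \<in> centered_psd n. \<forall>i j. i < j \<and> j < k \<longrightarrow> Kmap X $$ (i, j) = d (i, j)})"
proof -
  define Om where "Om = {X \<in> centered_psd n. \<forall>i j. i < j \<and> j < k \<longrightarrow> Kmap X $$ (i, j) = d (i, j)}"
  define Yb where "Yb = four_block_mat Yhat (0\<^sub>m k (n - k)) (0\<^sub>m (n - k) k) (0\<^sub>m (n - k) (n - k))"
  define D where "D = Kdag k (d_alpha k d)"
  define H where "H = {X \<in> centered_psd k. tr_inner X Yhat = 0}"
  have Yc: "Yhat \<in> carrier_mat k k" and Ypsd: "psd Yhat" and Yctr: "Yhat *\<^sub>v ones_vec k = 0\<^sub>v k"
    and Hdef: "face_hull (centered_psd k) {D} = H"
    using Yhat_exp unfolding exposes_def D_def H_def by auto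
  have Ys: "\<forall>i<k. \<forall>j<k. Yhat $$ (j, i) = Yhat $$ (i, j)"
    using Yhat_sym sym_iff[OF Yc] unfolding sym_mats_def by auto
  have Yr: "\<forall>i<k. (\<Sum>j<k. Yhat $$ (i, j)) = 0" using Yctr centered_iff[OF Yc] by auto
  have YS: "Yhat \<in> centered_psd k" unfolding cpsd_iff using Yc Ys Yr Ypsd psd_iff[OF Yc] by auto
  obtain Z0 where Z0: "Z0 \<in> Om" using nonempty unfolding Om_def by blast
  have Z0S: "Z0 \<in> centered_psd n" and Z0K: "\<forall>i j. i < j \<and> j < k \<longrightarrow> Kmap Z0 $$ (i, j) = d (i, j)"
    using Z0 unfolding Om_def by auto
  have Z0c: "Z0 \<in> carrier_mat n n" and Z0s: "\<forall>i<n. \<forall>j<n. Z0 $$ (j, i) = Z0 $$ (i, j)"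
    using Z0S cpsd_iff by auto
  have cmOm: "cm k X = D" if "X \<in> Om" for X
  proof -
    have XS: "X \<in> centered_psd n" and XK: "\<forall>i j. i < j \<and> j < k \<longrightarrow> Kmap X $$ (i, j) = d (i, j)"
      using that unfolding Om_def by auto
    have "X \<in> carrier_mat n n" "\<forall>i<n. \<forall>j<n. X $$ (j, i) = X $$ (i, j)" using XS cpsd_iff by auto
    then show ?thesis unfolding D_def using cm_Kdag k_le XK by blast
  qed
  have cmZ: "cm k Z0 = D" using cmOm[OF Z0] .
  have DS: "D \<in> centered_psd k" using cm_cpsd[OF Z0S k_le] cmZ by simp
  have Hface: "is_face (centered_psd k) H" and DH: "D \<in> H"
    using face_hull_face[OF convex_cpsd, of "{D}" k] DS Hdef by auto
  have trnn: "0 \<le> tr_inner A Yhat" if "A \<in> centered_psd k" for A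
    using tr_nonneg[OF YS _ that] Hface unfolding H_def by simp
  have Ybc: "Yb \<in> carrier_mat n n" unfolding Yb_def using four_carrier[OF Yc k_le] .
  have trB: "tr_inner X Yb = tr_inner (cm k X) Yhat" if "X \<in> carrier_mat n n" for X
    unfolding Yb_def using tr_block[OF Yc k_le that Ys Yr] .
  define FY where "FY = {X \<in> centered_psd n. tr_inner X Yb = 0}"
  have trpos: "0 \<le> tr_inner X Yb" if "X \<in> centered_psd n" for X
    using trB[OF cpsd_carrier[OF that]] trnn[OF cm_cpsd[OF that k_le]] by simp
  have FYface: "is_face (centered_psd n) FY" unfolding is_face_def
  proof (intro conjI ballI impI allI)
    show "FY \<subseteq> centered_psd n" unfolding FY_def by blast
    show "convex_mats FY" unfolding convex_mats_def
    proof (intro ballI allI impI)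
      fix A B and t :: real assume A: "A \<in> FY" and B: "B \<in> FY" and t: "0 \<le> t \<and> t \<le> 1"
      have AS: "A \<in> centered_psd n" and BS: "B \<in> centered_psd n" and "tr_inner A Yb = 0" "tr_inner B Yb = 0"
        using A B unfolding FY_def by auto
      then show "seg_pt t A B \<in> FY" unfolding FY_def
        using cpsd_seg[OF AS BS] t tr_seg[OF cpsd_carrier[OF AS] cpsd_carrier[OF BS] Ybc] by auto
    qed
  next
    fix A B and t :: real assume AS: "A \<in> centered_psd n" and BS: "B \<in> centered_psd n"
      and ex: "\<exists>t. 0 < t \<and> t < 1 \<and> seg_pt t A B \<in> FY" and t: "0 \<le> t \<and> t \<le> 1"
    from ex obtain t0 where t0: "0 < t0" "t0 < 1" "tr_inner (seg_pt t0 A B) Yb = 0" unfolding FY_def by blast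
    have e0: "(1 - t0) * tr_inner A Yb + t0 * tr_inner B Yb = 0"
      using t0(3) tr_seg[OF cpsd_carrier[OF AS] cpsd_carrier[OF BS] Ybc] by simp
    have p1: "0 \<le> (1 - t0) * tr_inner A Yb" and p2: "0 \<le> t0 * tr_inner B Yb"
      using trpos[OF AS] trpos[OF BS] t0 by auto
    have "(1 - t0) * tr_inner A Yb = 0" "t0 * tr_inner B Yb = 0" using e0 p1 p2 by linarith+
    then have "tr_inner A Yb = 0" "tr_inner B Yb = 0" using t0 by auto
    then show "seg_pt t A B \<in> FY" unfolding FY_def
      using cpsd_seg[OF AS BS] t tr_seg[OF cpsd_carrier[OF AS] cpsd_carrier[OF BS] Ybc] by auto
  qed
  have OmFY: "Om \<subseteq> FY"
  proof
    fix X assume X: "X \<in> Om"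
    then have XS: "X \<in> centered_psd n" unfolding Om_def by auto
    have "tr_inner X Yb = tr_inner D Yhat" using trB[OF cpsd_carrier[OF XS]] cmOm[OF X] by simp
    also have "\<dots> = 0" using DH unfolding H_def by auto
    finally show "X \<in> FY" unfolding FY_def using XS by auto
  qed
  have sub1: "face_hull (centered_psd n) Om \<subseteq> FY"
    unfolding face_hull_def using FYface OmFY by blast
  have sub2: "FY \<subseteq> face_hull (centered_psd n) Om"
  proof
    fix X assume X: "X \<in> FY"
    then have XS: "X \<in> centered_psd n" and X0: "tr_inner X Yb = 0" unfolding FY_def by auto
    have cmXS: "cm k X \<in> centered_psd k" using cm_cpsd[OF XS k_le] .
    have cmXH: "cm k X \<in> face_hull (centered_psd k) {D}"
      unfolding Hdef H_def using cmXS X0 trB[OF cpsd_carrier[OF XS]] by simp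
    define G where "G = {A \<in> centered_psd k. \<exists>c\<ge>0. \<forall>w. Q k A w \<le> c * Q k D w}"
    have Gface: "is_face (centered_psd k) G" unfolding G_def by (rule G_face[OF DS])
    have DG: "D \<in> G" unfolding G_def using DS by (auto intro!: exI[of _ 1])
    have "face_hull (centered_psd k) {D} \<subseteq> G" unfolding face_hull_def using Gface DG by blast
    then obtain c where c: "0 \<le> c" and hc: "\<forall>w. Q k (cm k X) w \<le> c * Q k D w"
      using cmXH unfolding G_def by blast
    have h: "\<forall>w. Q n X (Pv k w) \<le> c * Q n Z0 (Pv k w)"
      using hc Q_cm[OF k_le, of X] Q_cm[OF k_le, of Z0] cmZ by simp
    obtain K where K: "0 \<le> K" and hK: "\<forall>x. Q n X x \<le> K * (Q n Z0 x + (\<Sum>l<n. ((if k \<le> l then 1 else 0) * (x l - (\<Sum>i<n. x i) / n))^2))"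
      using main_est[OF XS Z0S k_le c h] by blast
    define Z where "Z = Z0 + Mmat n k"
    have Zc: "Z \<in> carrier_mat n n" unfolding Z_def using Z0c M_carrier by simp
    have ZOm: "Z \<in> Om" unfolding Om_def
    proof (intro CollectI conjI allI impI)
      show "Z \<in> centered_psd n" unfolding Z_def by (rule cpsd_add[OF Z0S M_cpsd])
      fix i j assume ij: "i < j \<and> j < k"
      then have "i < n" "j < n" "i < k" "j < k" using k_le by auto
      then show "Kmap Z $$ (i, j) = d (i, j)" unfolding Z_def
        using Kmap_add[OF Z0c M_carrier] M_Kmap[OF k_le] Z0K ij by simp
    qed
    have QZ: "Q n Z x = Q n Z0 x + (\<Sum>l<n. ((if k \<le> l then 1 else 0) * (x l - (\<Sum>i<n. x i) / n))^2)" for x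
      unfolding Z_def Q_add[OF Z0c M_carrier] M_Q ..
    show "X \<in> face_hull (centered_psd n) Om" unfolding face_hull_def
    proof (rule InterI)
      fix F assume "F \<in> {F. is_face (centered_psd n) F \<and> Om \<subseteq> F}"
      then have F: "is_face (centered_psd n) F" and OmF: "Om \<subseteq> F" by auto
      show "X \<in> F" by (rule face_dom[OF F _ XS K]) (use OmF ZOm hK QZ in auto)
    qed
  qed
  have eq: "face_hull (centered_psd n) Om = FY" using sub1 sub2 by blast
  have YQ: "\<forall>f. 0 \<le> Q k Yhat f" using YS cpsd_iff by auto
  have "\<forall>f. 0 \<le> Q n Yb f" unfolding Yb_def block_Q[OF Yc k_le] using YQ by simp
  then have Ybpsd: "psd Yb" using psd_iff[OF Ybc] by simp
  have "\<forall>i<n. (\<Sum>j<n. Yb $$ (i, j)) = 0" unfolding Yb_def using block_rows[OF Yc k_le Yr] by auto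
  then have Ybctr: "Yb *\<^sub>v ones_vec n = 0\<^sub>v n" using centered_iff[OF Ybc] by simp
  show ?thesis unfolding exposes_def Om_def[symmetric] Yb_def[symmetric] eq FY_def
    using Ybc Ybpsd Ybctr by auto
qed



end
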